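(* Let $T$ be a balanced tree. If $T$ has two leaves $l_1,l_2$ with $\mathrm{dist}(l_1,l_2)=4$, then $T$ is mixed.
   Context: A leaf is a vertex of degree 1; the height of a vertex is its minimum distance to a leaf; a tree is balanced if no two adjacent vertices have the same height. With $N(D)=\bigcup_{v\in D}\{u:uv\in E\}$, a TD-set is $D$ with $N(D)=V$, minimal if no proper subset is a TD-set. $T$ is unmixed if all minimal TD-sets have the same size, and mixed otherwise. *)

theory Defs
  imports Main
begin

definition graph :: "'a set \<Rightarrow> ('a \<Rightarrow> 'a \<Rightarrow> bool) \<Rightarrow> bool" where
  "graph V E \<longleftrightarrow> finite V \<and> V \<noteq> {} \<and> (\<forall>u v. E u v \<longrightarrow> E v u) \<and> (\<forall>v. \<not> E v v)
     \<and> (\<forall>u v. E u v \<longrightarrow> u \<in> V \<and> v \<in> V)"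

definition walk :: "'a set \<Rightarrow> ('a \<Rightarrow> 'a \<Rightarrow> bool) \<Rightarrow> 'a list \<Rightarrow> bool" where
  "walk V E xs \<longleftrightarrow> xs \<noteq> [] \<and> set xs \<subseteq> V \<and> (\<forall>i. Suc i < length xs \<longrightarrow> E (xs ! i) (xs ! Suc i))"

definition gconnected :: "'a set \<Rightarrow> ('a \<Rightarrow> 'a \<Rightarrow> bool) \<Rightarrow> bool" where
  "gconnected V E \<longleftrightarrow> (\<forall>u\<in>V. \<forall>v\<in>V. \<exists>xs. walk V E xs \<and> hd xs = u \<and> last xs = v)"

definition has_cycle :: "'a set \<Rightarrow> ('a \<Rightarrow> 'a \<Rightarrow> bool) \<Rightarrow> bool" where
  "has_cycle V E \<longleftrightarrow> (\<exists>xs. walk V E xs \<and> distinct xs \<and> length xs \<ge> 3 \<and> E (last xs) (hd xs))"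

definition tree :: "'a set \<Rightarrow> ('a \<Rightarrow> 'a \<Rightarrow> bool) \<Rightarrow> bool" where
  "tree V E \<longleftrightarrow> graph V E \<and> gconnected V E \<and> \<not> has_cycle V E"

definition gdist :: "'a set \<Rightarrow> ('a \<Rightarrow> 'a \<Rightarrow> bool) \<Rightarrow> 'a \<Rightarrow> 'a \<Rightarrow> nat" where
  "gdist V E u v = (LEAST n. \<exists>xs. walk V E xs \<and> hd xs = u \<and> last xs = v \<and> length xs = Suc n)"

definition neighbours :: "('a \<Rightarrow> 'a \<Rightarrow> bool) \<Rightarrow> 'a \<Rightarrow> 'a set" where
  "neighbours E v = {u. E v u}"

definition degree :: "('a \<Rightarrow> 'a \<Rightarrow> bool) \<Rightarrow> 'a \<Rightarrow> nat" where
  "degree E v = card (neighbours E v)"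

definition leaf :: "'a set \<Rightarrow> ('a \<Rightarrow> 'a \<Rightarrow> bool) \<Rightarrow> 'a \<Rightarrow> bool" where
  "leaf V E v \<longleftrightarrow> v \<in> V \<and> degree E v = 1"

definition height :: "'a set \<Rightarrow> ('a \<Rightarrow> 'a \<Rightarrow> bool) \<Rightarrow> 'a \<Rightarrow> nat" where
  "height V E v = (LEAST n. \<exists>l. leaf V E l \<and> gdist V E v l = n)"

definition balanced :: "'a set \<Rightarrow> ('a \<Rightarrow> 'a \<Rightarrow> bool) \<Rightarrow> bool" where
  "balanced V E \<longleftrightarrow> (\<forall>u v. E u v \<longrightarrow> height V E u \<noteq> height V E v)"

definition nbhd :: "('a \<Rightarrow> 'a \<Rightarrow> bool) \<Rightarrow> 'a set \<Rightarrow> 'a set" where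
  "nbhd E D = (\<Union>v\<in>D. neighbours E v)"

definition TD_set :: "'a set \<Rightarrow> ('a \<Rightarrow> 'a \<Rightarrow> bool) \<Rightarrow> 'a set \<Rightarrow> bool" where
  "TD_set V E D \<longleftrightarrow> D \<subseteq> V \<and> nbhd E D = V"

definition minimal_TD_set :: "'a set \<Rightarrow> ('a \<Rightarrow> 'a \<Rightarrow> bool) \<Rightarrow> 'a set \<Rightarrow> bool" where
  "minimal_TD_set V E D \<longleftrightarrow> TD_set V E D \<and> (\<forall>D'. D' \<subset> D \<longrightarrow> \<not> TD_set V E D')"

definition unmixed :: "'a set \<Rightarrow> ('a \<Rightarrow> 'a \<Rightarrow> bool) \<Rightarrow> bool" where
  "unmixed V E \<longleftrightarrow> (\<forall>D1 D2. minimal_TD_set V E D1 \<longrightarrow> minimal_TD_set V E D2 \<longrightarrow> card D1 = card D2)"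

definition mixed :: "'a set \<Rightarrow> ('a \<Rightarrow> 'a \<Rightarrow> bool) \<Rightarrow> bool" where
  "mixed V E \<longleftrightarrow> \<not> unmixed V E"

end

theory Submission
  imports Defs
begin

lemma walk_single[simp]: "walk V E [x] \<longleftrightarrow> x \<in> V"
  by (auto simp: walk_def)

lemma walk_cons2[simp]: "walk V E (x # y # xs) \<longleftrightarrow> x \<in> V \<and> E x y \<and> walk V E (y # xs)"
proof
  assume w: "walk V E (x # y # xs)"
  have "E x y" using w unfolding walk_def by (metis length_Cons nth_Cons_0 nth_Cons_Suc zero_less_Suc Suc_less_eq)
  moreover have "walk V E (y # xs)" using w 
  proof -
    have "\<forall>i. Suc i < length (y # xs) \<longrightarrow> E ((y # xs) ! i) ((y # xs) ! Suc i)"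
    proof (intro allI impI)
      fix i assume "Suc i < length (y # xs)"
      then have "Suc (Suc i) < length (x # y # xs)" by simp
      then have "E ((x # y # xs) ! Suc i) ((x # y # xs) ! Suc (Suc i))" using w unfolding walk_def by blast
      then show "E ((y # xs) ! i) ((y # xs) ! Suc i)" by simp
    qed
    then show ?thesis using w unfolding walk_def by auto
  qed
  ultimately show "x \<in> V \<and> E x y \<and> walk V E (y # xs)" using w by (auto simp: walk_def)
next
  assume h: "x \<in> V \<and> E x y \<and> walk V E (y # xs)"
  show "walk V E (x # y # xs)" unfolding walk_def
  proof (intro conjI allI impI)
    show "set (x # y # xs) \<subseteq> V" using h by (auto simp: walk_def)
  next
    fix i assume "Suc i < length (x # y # xs)"
    then show "E ((x # y # xs) ! i) ((x # y # xs) ! Suc i)"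
      using h unfolding walk_def by (cases i) auto
  qed simp
qed

lemma nbhd_iff[simp]: "u \<in> nbhd E D \<longleftrightarrow> (\<exists>v\<in>D. E v u)"
  by (auto simp: nbhd_def neighbours_def)

lemma len5: "length xs = 5 \<Longrightarrow> \<exists>x0 x1 x2 x3 x4. xs = [x0,x1,x2,x3,x4]"
  by (simp add: numeral_eq_Suc length_Suc_conv) blast

lemma leaf_unique:
  assumes "leaf V E l" "E l x" "E l y" shows "x = y"
proof -
  have "card {u. E l u} = 1" using assms(1) by (simp add: leaf_def degree_def neighbours_def)
  then obtain w where "{u. E l u} = {w}" by (metis One_nat_def card_1_singletonE)
  then have "x = w" "y = w" using assms(2,3) by (metis mem_Collect_eq singletonD)+
  then show ?thesis by simp
qed

lemma gdist_le:
  assumes "walk V E xs" "hd xs = u" "last xs = v" "length xs = Suc n"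
  shows "gdist V E u v \<le> n"
  unfolding gdist_def by (rule Least_le) (use assms in blast)

lemma height_le: "leaf V E l \<Longrightarrow> height V E v \<le> gdist V E v l"
  unfolding height_def by (rule Least_le) blast

lemma height_leaf: "leaf V E l \<Longrightarrow> height V E l = 0"
proof -
  assume l: "leaf V E l"
  have "gdist V E l l \<le> 0" by (rule gdist_le[of V E "[l]"]) (use l in \<open>auto simp: leaf_def\<close>)
  then show ?thesis using height_le[OF l, of l] by simp
qed

lemma height_adj_leaf:
  assumes g: "graph V E" and bal: "balanced V E" and l: "leaf V E l" and e: "E x l"
  shows "height V E x = 1"
proof -
  have "gdist V E x l \<le> 1"
    by (rule gdist_le[of V E "[x,l]"]) (use g e in \<open>auto simp: graph_def\<close>)
  moreover have "height V E x \<noteq> 0" using bal e height_leaf[OF l] unfolding balanced_def by metis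
  ultimately show ?thesis using height_le[OF l, of x] by simp
qed

theorem theorem3p29:
  fixes V :: "'a set" and E :: "'a \<Rightarrow> 'a \<Rightarrow> bool" and l1 l2 :: 'a
  assumes "tree V E" and "balanced V E"
    and "leaf V E l1" and "leaf V E l2" and "gdist V E l1 l2 = 4"
  shows "mixed V E"
proof -
  note tr = assms(1) and bal = assms(2) and L1 = assms(3) and L2 = assms(4) and d4 = assms(5)
  have g: "graph V E" and con: "gconnected V E" and nc: "\<not> has_cycle V E"
    using tr by (auto simp: tree_def)
  have fin: "finite V" and sym: "\<And>u v. E u v \<Longrightarrow> E v u" and irr: "\<And>v. \<not> E v v"
    and inV: "\<And>u v. E u v \<Longrightarrow> u \<in> V \<and> v \<in> V"
    using g by (auto simp: graph_def)
  have l1V: "l1 \<in> V" and l2V: "l2 \<in> V" using L1 L2 by (auto simp: leaf_def)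
  define P where "P n = (\<exists>xs. walk V E xs \<and> hd xs = l1 \<and> last xs = l2 \<and> length xs = Suc n)" for n
  have exP: "\<exists>n. P n"
  proof -
    obtain xs where "walk V E xs" "hd xs = l1" "last xs = l2" using con l1V l2V by (auto simp: gconnected_def)
    moreover have "xs \<noteq> []" using \<open>walk V E xs\<close> by (simp add: walk_def)
    ultimately have "P (length xs - 1)" unfolding P_def by (intro exI[of _ xs]) auto
    then show ?thesis by blast
  qed
  have lp: "(LEAST n. P n) = 4" using d4 by (simp add: gdist_def P_def)
  have P4: "P 4" using LeastI_ex[OF exP] lp by simp
  have nP: "\<And>m. m < 4 \<Longrightarrow> \<not> P m" using not_less_Least lp by metis
  obtain xs where xs: "walk V E xs" "hd xs = l1" "last xs = l2" "length xs = 5"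
    using P4 unfolding P_def by auto
  then obtain x0 a c b x4 where xsd: "xs = [x0,a,c,b,x4]" using len5 by blast
  have x0: "x0 = l1" and x4: "x4 = l2" using xs xsd by auto
  have E1: "E l1 a" and Eac: "E a c" and Ecb: "E c b" and E4: "E b l2"
    using xs(1) xsd x0 x4 by auto
  have Eba: "E b c" "E c a" using Eac Ecb sym by auto
  have El2b: "E l2 b" and Eal1: "E a l1" using E1 E4 sym by auto
  have aV: "a \<in> V" "b \<in> V" "c \<in> V" using inV Eac Ecb by auto
  have ab: "a \<noteq> b"
  proof
    assume "a = b"
    then have "P 2" unfolding P_def using E1 E4 l1V aV l2V by (intro exI[of _ "[l1,a,l2]"]) auto
    then show False using nP by simp
  qed
  have nEab: "\<not> E a b"
  proof
    assume "E a b"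
    then have "P 3" unfolding P_def using E1 E4 l1V aV l2V by (intro exI[of _ "[l1,a,b,l2]"]) auto
    then show False using nP by simp
  qed
  have nEba: "\<not> E b a" using nEab sym by blast
  have l12: "l1 \<noteq> l2"
  proof
    assume "l1 = l2"
    then have "P 0" unfolding P_def using l1V by (intro exI[of _ "[l1]"]) auto
    then show False using nP by simp
  qed
  have nl1: "\<And>w. E l1 w \<Longrightarrow> w = a" using leaf_unique[OF L1] E1 by blast
  have nl2: "\<And>w. E l2 w \<Longrightarrow> w = b" using leaf_unique[OF L2] El2b by blast
  have ha: "height V E a = 1" using height_adj_leaf[OF g bal L1] Eal1 by blast
  have hb: "height V E b = 1" using height_adj_leaf[OF g bal L2] E4 by blast
  have hbal: "\<And>u v. E u v \<Longrightarrow> height V E u \<noteq> height V E v" using bal by (auto simp: balanced_def)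
  define A where "A = {w \<in> V. \<not> E a w \<and> \<not> E b w}"
  define Z where "Z = V - {a, b}"
  have cyc: "\<And>ys. walk V E ys \<Longrightarrow> distinct ys \<Longrightarrow> length ys \<ge> 3 \<Longrightarrow> E (last ys) (hd ys) \<Longrightarrow> False"
    using nc by (auto simp: has_cycle_def)
  have key: "\<forall>z\<in>Z. \<exists>w\<in>A. E w z"
  proof
    fix v assume vZ: "v \<in> Z"
    then have vV: "v \<in> V" and va: "v \<noteq> a" and vb: "v \<noteq> b" by (auto simp: Z_def)
    have aA: "a \<in> A" and bA: "b \<in> A" using aV irr nEab nEba by (auto simp: A_def)
    show "\<exists>w\<in>A. E w v"
    proof (cases "E a v \<or> E b v")
      case True then show ?thesis using aA bA by blast
    next
      case False
      then have nav: "\<not> E a v" "\<not> E b v" by auto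
      obtain x where vx: "E v x"
      proof -
        obtain ys where ys: "walk V E ys" "hd ys = v" "last ys = a"
          using con vV aV by (auto simp: gconnected_def)
        have "ys \<noteq> []" using ys by (simp add: walk_def)
        have "length ys \<noteq> 1"
        proof
          assume "length ys = 1"
          then obtain y where "ys = [y]" by (metis One_nat_def length_0_conv length_Suc_conv)
          then show False using ys va by simp
        qed
        then have "Suc 0 < length ys" using \<open>ys \<noteq> []\<close> by (cases ys) auto
        then have "E (ys ! 0) (ys ! Suc 0)" using ys(1) by (simp add: walk_def)
        moreover have "ys ! 0 = v" using ys(2) \<open>ys \<noteq> []\<close> by (simp add: hd_conv_nth)
        ultimately show ?thesis using that by blast
      qed
      show ?thesis
      proof (cases "x \<in> A")
        case True then show ?thesis using vx sym by blast
      next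
        case False
        then have xab: "E a x \<or> E b x" using vx inV by (auto simp: A_def)
        show ?thesis
        proof (cases "leaf V E v")
          case True
          have "height V E x = 1" using height_adj_leaf[OF g bal True] vx sym by blast
          then show ?thesis using xab hbal ha hb by metis
        next
          case nleaf: False
          have finN: "finite {u. E v u}" 
            by (rule finite_subset[OF _ fin]) (use inV in blast)
          have "card {u. E v u} \<noteq> 1" using nleaf vV by (simp add: leaf_def degree_def neighbours_def)
          then obtain x' where vx': "E v x'" and xx': "x' \<noteq> x"
          proof -
            have "{u. E v u} \<noteq> {x}" using \<open>card {u. E v u} \<noteq> 1\<close> by auto
            then obtain y where "y \<in> {u. E v u}" "y \<noteq> x" using vx by blast
            then show ?thesis using that by blast
          qed
          show ?thesis
          proof (cases "x' \<in> A")
            case True then show ?thesis using vx' sym by blast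
          next
            case False
            then have xab': "E a x' \<or> E b x'" using vx' inV by (auto simp: A_def)
            have vc: "v \<noteq> c" using nav Eac by auto
            have W: "\<And>ys. walk V E ys \<Longrightarrow> distinct ys \<Longrightarrow> length ys \<ge> 3 \<Longrightarrow> E (last ys) (hd ys) \<Longrightarrow> False"
              by (rule cyc)
            have nx: "x \<noteq> v" "x' \<noteq> v" using vx vx' irr by auto
            have xV: "x \<in> V" "x' \<in> V" using vx vx' inV by auto
            have svx: "E x v" "E x' v" using vx vx' sym by auto
            have ne: "\<And>u w. E u w \<Longrightarrow> u \<noteq> w" using irr by metis
            have "False"
            proof -
              consider "E a x" "E a x'" | "E b x" "E b x'" | "E a x" "E b x'" | "E b x" "E a x'"
                using xab xab' by blast
              then show False
              proof cases
                case 1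
                have s: "E x a" "E x' a" using 1 sym by auto
                show False by (rule W[of "[v,x,a,x']"]) (use 1 s svx vx vV xV aV xx' va nav ne in auto)
              next
                case 2
                have s: "E x b" "E x' b" using 2 sym by auto
                show False by (rule W[of "[v,x,b,x']"]) (use 2 s svx vx vV xV aV xx' vb nav ne in auto)
              next
                case 3
                have s: "E x a" "E x' b" using 3 sym by auto
                show False
                proof (cases "x = c")
                  case True
                  show False by (rule W[of "[v,c,b,x']"]) (use True 3 s svx vx vV xV aV xx' vb vc nav ne Ecb in auto)
                next
                  case xc: False
                  show False
                  proof (cases "x' = c")
                    case True
                    show False by (rule W[of "[v,x,a,c]"]) (use True 3 s svx vx vV xV aV xx' va vc nav ne Eac Eba in auto)
                  next
                    case False
                    show False by (rule W[of "[v,x,a,c,b,x']"]) (use False xc 3 s svx vx vV xV aV xx' va vb vc nav ne Eac Ecb Eba nEab nEba ab in auto)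
                  qed
                qed
              next
                case 4
                have s: "E x b" "E x' a" using 4 sym by auto
                show False
                proof (cases "x' = c")
                  case True
                  show False by (rule W[of "[v,x,b,c]"]) (use True 4 s svx vx vV xV aV xx' vb vc nav ne Ecb Eba in auto)
                next
                  case xc: False
                  show False
                  proof (cases "x = c")
                    case True
                    show False by (rule W[of "[v,c,a,x']"]) (use True 4 s svx vx vx' vV xV aV xx' va vc nav ne Eac Eba in auto)
                  next
                    case False
                    show False by (rule W[of "[v,x',a,c,b,x]"]) (use False xc 4 s svx vx vx' vV xV aV xx' va vb vc nav ne Eac Ecb Eba nEab nEba ab in auto)
                  qed
                qed
              qed
            qed
            then show ?thesis ..
          qed
        qed
      qed
    qed
  qed
  have finA: "finite A" using fin by (simp add: A_def)
  have AV: "A \<subseteq> V" by (auto simp: A_def)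
  have aZ: "a \<notin> Z" "b \<notin> Z" by (auto simp: Z_def)
  define Q where "Q S = (S \<subseteq> A \<and> (\<forall>z\<in>Z. \<exists>w\<in>S. E w z))" for S
  have "Q A" using key by (simp add: Q_def)
  then obtain D0 where QD0: "Q D0" and D0le: "\<And>S. Q S \<Longrightarrow> card D0 \<le> card S"
    using ex_has_least_nat[of Q A card] by blast
  have D0A: "D0 \<subseteq> A" and D0dom: "\<forall>z\<in>Z. \<exists>w\<in>D0. E w z" using QD0 by (auto simp: Q_def)
  have finD0: "finite D0" using D0A finA finite_subset by blast
  have D0min: "\<And>S. S \<subseteq> D0 \<Longrightarrow> \<forall>z\<in>Z. \<exists>w\<in>S. E w z \<Longrightarrow> S = D0"
  proof -
    fix S assume "S \<subseteq> D0" "\<forall>z\<in>Z. \<exists>w\<in>S. E w z"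
    then have "Q S" using D0A by (auto simp: Q_def)
    then show "S = D0" using D0le card_seteq[OF finD0 \<open>S \<subseteq> D0\<close>] by blast
  qed
  have noNa: "\<And>w. w \<in> D0 \<Longrightarrow> \<not> E w a \<and> \<not> E w b" using D0A sym by (auto simp: A_def)
  have l1D0: "l1 \<notin> D0" "l2 \<notin> D0" "c \<notin> D0" using noNa E1 El2b Eba by auto
  define D1 where "D1 = insert c D0"
  have TD1: "TD_set V E D1"
    unfolding TD_set_def
  proof
    show "D1 \<subseteq> V" using D0A AV aV by (auto simp: D1_def)
    show "nbhd E D1 = V"
    proof
      show "nbhd E D1 \<subseteq> V" using inV by auto
      show "V \<subseteq> nbhd E D1"
      proof
        fix v assume "v \<in> V"
        show "v \<in> nbhd E D1"
        proof (cases "v \<in> Z")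
          case True then show ?thesis using D0dom by (auto simp: D1_def)
        next
          case False then have "v = a \<or> v = b" using \<open>v \<in> V\<close> by (auto simp: Z_def)
          then show ?thesis using Eba Ecb by (auto simp: D1_def)
        qed
      qed
    qed
  qed
  define R where "R S = (S \<subseteq> D1 \<and> TD_set V E S)" for S
  have "R D1" using TD1 by (simp add: R_def)
  then obtain D1' where RD1': "R D1'" and D1'le: "\<And>S. R S \<Longrightarrow> card D1' \<le> card S"
    using ex_has_least_nat[of R D1 card] by blast
  have finD1: "finite D1" using finD0 by (simp add: D1_def)
  have min1: "minimal_TD_set V E D1'"
    unfolding minimal_TD_set_def
  proof (intro conjI allI impI)
    show "TD_set V E D1'" using RD1' by (simp add: R_def)
    fix S assume "S \<subset> D1'"
    show "\<not> TD_set V E S"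
    proof
      assume "TD_set V E S"
      then have "R S" using \<open>S \<subset> D1'\<close> RD1' by (auto simp: R_def)
      then have "card D1' \<le> card S" by (rule D1'le)
      moreover have "finite D1'" using RD1' finD1 finite_subset by (auto simp: R_def)
      ultimately show False using psubset_card_mono[OF _ \<open>S \<subset> D1'\<close>] by simp
    qed
  qed
  have cD1': "card D1' \<le> card D0 + 1"
  proof -
    have "card D1' \<le> card D1" using RD1' finD1 card_mono by (auto simp: R_def)
    also have "card D1 \<le> card D0 + 1" by (simp add: D1_def card_insert_le_m1 finD0 l1D0)
    finally show ?thesis .
  qed
  define D2 where "D2 = D0 \<union> {l1, l2}"
  have finD2: "finite D2" using finD0 by (simp add: D2_def)
  have cD2: "card D2 = card D0 + 2" using l1D0 l12 finD0 by (simp add: D2_def)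
  have TD2: "TD_set V E D2"
    unfolding TD_set_def
  proof
    show "D2 \<subseteq> V" using D0A AV l1V l2V by (auto simp: D2_def)
    show "nbhd E D2 = V"
    proof
      show "nbhd E D2 \<subseteq> V" using inV by auto
      show "V \<subseteq> nbhd E D2"
      proof
        fix v assume "v \<in> V"
        show "v \<in> nbhd E D2"
        proof (cases "v \<in> Z")
          case True then show ?thesis using D0dom by (auto simp: D2_def)
        next
          case False then have "v = a \<or> v = b" using \<open>v \<in> V\<close> by (auto simp: Z_def)
          then show ?thesis using E1 El2b by (auto simp: D2_def)
        qed
      qed
    qed
  qed
  have min2: "minimal_TD_set V E D2"
    unfolding minimal_TD_set_def
  proof (intro conjI allI impI)
    show "TD_set V E D2" by (rule TD2)
    fix S assume SD: "S \<subset> D2"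
    show "\<not> TD_set V E S"
    proof
      assume TS: "TD_set V E S"
      then have nS: "nbhd E S = V" by (simp add: TD_set_def)
      obtain w1 where w1: "w1 \<in> S" "E w1 a" using nS aV by (metis nbhd_iff)
      have "w1 = l1"
      proof -
        have "w1 \<in> D2" using w1 SD by auto
        moreover have "w1 \<notin> D0" using noNa w1 by blast
        moreover have "w1 \<noteq> l2" using nl2 w1 ab by blast
        ultimately show ?thesis by (auto simp: D2_def)
      qed
      obtain w2 where w2: "w2 \<in> S" "E w2 b" using nS aV by (metis nbhd_iff)
      have "w2 = l2"
      proof -
        have "w2 \<in> D2" using w2 SD by auto
        moreover have "w2 \<notin> D0" using noNa w2 by blast
        moreover have "w2 \<noteq> l1" using nl1 w2 ab by blast
        ultimately show ?thesis by (auto simp: D2_def)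
      qed
      have "\<forall>z\<in>Z. \<exists>w\<in>S \<inter> D0. E w z"
      proof
        fix z assume zZ: "z \<in> Z"
        then obtain w where w: "w \<in> S" "E w z" using nS by (auto simp: Z_def)
        have "w \<noteq> l1" using nl1 w zZ aZ by blast
        moreover have "w \<noteq> l2" using nl2 w zZ aZ by blast
        moreover have "w \<in> D2" using w SD by auto
        ultimately show "\<exists>w\<in>S \<inter> D0. E w z" using w by (auto simp: D2_def)
      qed
      then have "S \<inter> D0 = D0" using D0min by blast
      then have "D2 \<subseteq> S" using w1 w2 \<open>w1 = l1\<close> \<open>w2 = l2\<close> by (auto simp: D2_def)
      then show False using SD by auto
    qed
  qed
  have "card D1' \<noteq> card D2" using cD1' cD2 by simp
  then show ?thesis using min1 min2 unfolding mixed_def unmixed_def by blast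
qed

end
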